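(* Let $X$ be a metrizable space. Then $X$ is $0$-dimensional and compact if and only if the set of all uniformly disconnected metrics in $\mathrm{Met}(X)$ is a dense $F_{\sigma}$ subset of $(\mathrm{Met}(X), \mathcal{D}_X)$.
   Context: For a metrizable space $X$, $\mathrm{Met}(X)$ denotes the set of all metrics on $X$ generating the given topology of $X$, and $\mathcal{D}_X(d,e)=\sup_{x,y\in X}|d(x,y)-e(x,y)|$ (a possibly $\infty$-valued metric on $\mathrm{Met}(X)$, which carries the induced topology). "$0$-dimensional" means covering dimension $0$. A metric space $(X,d)$ is uniformly disconnected if there exists $\delta\in(0,1)$ such that for every non-constant finite sequence $z_1,\dots,z_N$ in $X$ one has $\delta\, d(z_1,z_N)\le\max_{1\le i\le N-1} d(z_i,z_{i+1})$. A subset is $F_\sigma$ if it is a countable union of closed sets. *)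

theory Defs
  imports "HOL-Analysis.Analysis" "HOL-Library.Extended_Nonnegative_Real"
begin

text \<open>Covering dimension at most 0 (Cech-Lebesgue): every finite open cover has a finite
  open refinement of order 0, i.e. consisting of pairwise disjoint sets.\<close>
definition covering_dim_zero :: "'a topology \<Rightarrow> bool" where
  "covering_dim_zero X \<longleftrightarrow>
     (\<forall>\<U>. finite \<U> \<and> (\<forall>U\<in>\<U>. openin X U) \<and> \<Union>\<U> = topspace X \<longrightarrow>
        (\<exists>\<V>. finite \<V> \<and> (\<forall>V\<in>\<V>. openin X V) \<and> \<Union>\<V> = topspace X \<and>
             (\<forall>V\<in>\<V>. \<exists>U\<in>\<U>. V \<subseteq> U) \<and> pairwise disjnt \<V>))"

definition Met :: "'a topology \<Rightarrow> ('a \<Rightarrow> 'a \<Rightarrow> real) set" where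
  "Met X = {d. Metric_space (topspace X) d \<and> Metric_space.mtopology (topspace X) d = X}"

definition DX :: "'a topology \<Rightarrow> ('a \<Rightarrow> 'a \<Rightarrow> real) \<Rightarrow> ('a \<Rightarrow> 'a \<Rightarrow> real) \<Rightarrow> ennreal" where
  "DX X d e = (SUP p \<in> topspace X \<times> topspace X. ennreal \<bar>d (fst p) (snd p) - e (fst p) (snd p)\<bar>)"

definition Met_open :: "'a topology \<Rightarrow> ('a \<Rightarrow> 'a \<Rightarrow> real) set \<Rightarrow> bool" where
  "Met_open X U \<longleftrightarrow> U \<subseteq> Met X \<and>
     (\<forall>d\<in>U. \<exists>r>0. \<forall>e\<in>Met X. DX X d e < ennreal r \<longrightarrow> e \<in> U)"

lemma istopology_Met_open: "istopology (Met_open X)"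
  unfolding istopology_def
proof (intro conjI allI impI)
  fix S T assume S: "Met_open X S" and T: "Met_open X T"
  show "Met_open X (S \<inter> T)"
    unfolding Met_open_def
  proof (intro conjI ballI)
    show "S \<inter> T \<subseteq> Met X" using S unfolding Met_open_def by blast
    fix d assume d: "d \<in> S \<inter> T"
    obtain r where r: "r > 0" "\<forall>e\<in>Met X. DX X d e < ennreal r \<longrightarrow> e \<in> S"
      using S d unfolding Met_open_def by blast
    obtain s where s: "s > 0" "\<forall>e\<in>Met X. DX X d e < ennreal s \<longrightarrow> e \<in> T"
      using T d unfolding Met_open_def by blast
    show "\<exists>r>0. \<forall>e\<in>Met X. DX X d e < ennreal r \<longrightarrow> e \<in> S \<inter> T"
    proof (intro exI[of _ "min r s"] conjI ballI impI)
      show "0 < min r s" using r s by simp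
      fix e assume "e \<in> Met X" "DX X d e < ennreal (min r s)"
      moreover have "ennreal (min r s) \<le> ennreal r" "ennreal (min r s) \<le> ennreal s"
        by (auto intro: ennreal_leI)
      ultimately have "DX X d e < ennreal r" "DX X d e < ennreal s"
        using order_less_le_trans by blast+
      then show "e \<in> S \<inter> T" using r(2) s(2) \<open>e \<in> Met X\<close> by blast
    qed
  qed
next
  fix K assume K: "\<forall>S\<in>K. Met_open X S"
  show "Met_open X (\<Union>K)"
    unfolding Met_open_def
  proof (intro conjI ballI)
    show "\<Union>K \<subseteq> Met X" using K unfolding Met_open_def by blast
    fix d assume "d \<in> \<Union>K"
    then obtain S where "S \<in> K" "d \<in> S" by blast
    then obtain r where "r > 0" "\<forall>e\<in>Met X. DX X d e < ennreal r \<longrightarrow> e \<in> S"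
      using K unfolding Met_open_def by blast
    then show "\<exists>r>0. \<forall>e\<in>Met X. DX X d e < ennreal r \<longrightarrow> e \<in> \<Union>K"
      using \<open>S \<in> K\<close> by blast
  qed
qed

definition Met_topology :: "'a topology \<Rightarrow> ('a \<Rightarrow> 'a \<Rightarrow> real) topology" where
  "Met_topology X = topology (Met_open X)"

lemma openin_Met_topology: "openin (Met_topology X) U \<longleftrightarrow> Met_open X U"
  unfolding Met_topology_def by (simp add: istopology_Met_open topology_inverse')

definition uniformly_disconnected :: "'a set \<Rightarrow> ('a \<Rightarrow> 'a \<Rightarrow> real) \<Rightarrow> bool" where
  "uniformly_disconnected M d \<longleftrightarrow>
     (\<exists>\<delta>. 0 < \<delta> \<and> \<delta> < 1 \<and>
        (\<forall>N::nat. \<forall>z::nat \<Rightarrow> 'a. (\<forall>i\<le>N. z i \<in> M) \<and> (\<exists>i\<le>N. \<exists>j\<le>N. z i \<noteq> z j) \<longrightarrow>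
            \<delta> * d (z 0) (z N) \<le> Max ((\<lambda>i. d (z i) (z (Suc i))) ` {..<N})))"

end

theory Submission
  imports Defs
begin

lemma DX_term_le: "x \<in> topspace X \<Longrightarrow> y \<in> topspace X \<Longrightarrow> ennreal \<bar>d x y - e x y\<bar> \<le> DX X d e"
  unfolding DX_def by (rule SUP_upper2[of "(x,y)"]) auto

lemma DX_lt: "DX X d e < ennreal r \<Longrightarrow> x \<in> topspace X \<Longrightarrow> y \<in> topspace X \<Longrightarrow> \<bar>d x y - e x y\<bar> < r"
proof -
  assume a: "DX X d e < ennreal r" "x \<in> topspace X" "y \<in> topspace X"
  have "ennreal \<bar>d x y - e x y\<bar> < ennreal r" using DX_term_le[OF a(2,3), of d e] a(1) by (rule order.strict_trans1)
  then show ?thesis by (subst (asm) ennreal_less_iff) auto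
qed

lemma DX_le: "(\<And>x y. x \<in> topspace X \<Longrightarrow> y \<in> topspace X \<Longrightarrow> \<bar>d x y - e x y\<bar> \<le> c) \<Longrightarrow> DX X d e \<le> ennreal c"
  unfolding DX_def by (rule SUP_least) (auto intro: ennreal_leI)

lemma DX_triangle: "DX X d f \<le> DX X d e + DX X e f"
  unfolding DX_def[of X d f]
proof (rule SUP_least)
  fix p assume p: "p \<in> topspace X \<times> topspace X"
  have "ennreal \<bar>d (fst p) (snd p) - f (fst p) (snd p)\<bar> \<le> ennreal (\<bar>d (fst p) (snd p) - e (fst p) (snd p)\<bar> + \<bar>e (fst p) (snd p) - f (fst p) (snd p)\<bar>)"
    by (intro ennreal_leI) linarith
  also have "\<dots> = ennreal \<bar>d (fst p) (snd p) - e (fst p) (snd p)\<bar> + ennreal \<bar>e (fst p) (snd p) - f (fst p) (snd p)\<bar>"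
    by (simp add: ennreal_plus)
  also have "\<dots> \<le> DX X d e + DX X e f"
    using p by (intro add_mono DX_term_le) auto
  finally show "ennreal \<bar>d (fst p) (snd p) - f (fst p) (snd p)\<bar> \<le> DX X d e + DX X e f" .
qed

lemma ennreal_lt_real: "(x::ennreal) < ennreal r \<Longrightarrow> \<exists>t. 0 \<le> t \<and> t < r \<and> x = ennreal t"
proof (cases x)
  case (real t)
  assume "x < ennreal r"
  with real show ?thesis by (auto simp: ennreal_less_iff)
next
  case top
  assume "x < ennreal r"
  with top show ?thesis by simp
qed

lemma DX_ball_open:
  assumes "r > 0"
  shows "Met_open X {e \<in> Met X. DX X d e < ennreal r}"
  unfolding Met_open_def
proof (intro conjI ballI)
  fix e assume "e \<in> {e \<in> Met X. DX X d e < ennreal r}"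
  then obtain t where t: "0 \<le> t" "t < r" "DX X d e = ennreal t" using ennreal_lt_real by blast
  show "\<exists>s>0. \<forall>e'\<in>Met X. DX X e e' < ennreal s \<longrightarrow> e' \<in> {e \<in> Met X. DX X d e < ennreal r}"
  proof (intro exI[of _ "r - t"] conjI ballI impI)
    fix e' assume "e' \<in> Met X" "DX X e e' < ennreal (r - t)"
    then obtain t' where t': "0 \<le> t'" "t' < r - t" "DX X e e' = ennreal t'" using ennreal_lt_real by blast
    have "DX X d e' \<le> ennreal t + ennreal t'" using DX_triangle[of X d e' e] t t' by simp
    also have "\<dots> = ennreal (t + t')" using t t' by (simp add: ennreal_plus)
    also have "\<dots> < ennreal r" using t t' ennreal_less_iff[of "t+t'" r] by linarith
    finally show "e' \<in> {e \<in> Met X. DX X d e < ennreal r}" using \<open>e' \<in> Met X\<close> by simp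
  qed (use t in auto)
qed auto

lemma topspace_Met_topology: "topspace (Met_topology X) = Met X"
proof -
  have "openin (Met_topology X) (Met X)"
    unfolding openin_Met_topology Met_open_def by (auto intro: exI[of _ 1])
  then have "Met X \<subseteq> topspace (Met_topology X)" by (rule openin_subset)
  moreover have "topspace (Met_topology X) \<subseteq> Met X"
    unfolding topspace_def openin_Met_topology Met_open_def by auto
  ultimately show ?thesis by blast
qed

definition UDd :: "real \<Rightarrow> 'a set \<Rightarrow> ('a \<Rightarrow> 'a \<Rightarrow> real) \<Rightarrow> bool" where
  "UDd \<delta> M d \<longleftrightarrow> (\<forall>N::nat. \<forall>z::nat \<Rightarrow> 'a. (\<forall>i\<le>N. z i \<in> M) \<and> (\<exists>i\<le>N. \<exists>j\<le>N. z i \<noteq> z j) \<longrightarrow>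
            \<delta> * d (z 0) (z N) \<le> Max ((\<lambda>i. d (z i) (z (Suc i))) ` {..<N}))"

lemma nonconst_pos: "(\<exists>i\<le>N. \<exists>j\<le>N. z i \<noteq> z j) \<Longrightarrow> 0 < (N::nat)"
  by (cases N) auto

lemma UDd_closed:
  assumes "0 < \<delta>"
  shows "closedin (Met_topology X) {d \<in> Met X. UDd \<delta> (topspace X) d}"
  unfolding closedin_def topspace_Met_topology openin_Met_topology Met_open_def
proof (intro conjI ballI)
  fix d assume "d \<in> Met X - {d \<in> Met X. UDd \<delta> (topspace X) d}"
  then have dM: "d \<in> Met X" and nd: "\<not> UDd \<delta> (topspace X) d" by auto
  then obtain N z where zM: "\<forall>i\<le>N. z i \<in> topspace X" and nc: "\<exists>i\<le>N. \<exists>j\<le>N. z i \<noteq> z j"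
    and viol: "\<not> \<delta> * d (z 0) (z N) \<le> Max ((\<lambda>i. d (z i) (z (Suc i))) ` {..<N})"
    unfolding UDd_def by blast
  have N0: "0 < N" using nonconst_pos[OF nc] .
  define m where "m = Max ((\<lambda>i. d (z i) (z (Suc i))) ` {..<N})"
  define r where "r = (\<delta> * d (z 0) (z N) - m) / (\<delta> + 1)"
  have r0: "r > 0" using viol assms unfolding r_def m_def by (auto intro!: divide_pos_pos)
  have rr: "\<delta> * d (z 0) (z N) = m + r * (\<delta> + 1)" using assms unfolding r_def by (simp add: field_simps)
  show "\<exists>r>0. \<forall>e\<in>Met X. DX X d e < ennreal r \<longrightarrow> e \<in> Met X - {d \<in> Met X. UDd \<delta> (topspace X) d}"
  proof (intro exI[of _ r] conjI ballI impI)
    fix e assume eM: "e \<in> Met X" and de: "DX X d e < ennreal r"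
    have steps: "e (z i) (z (Suc i)) < m + r" if "i < N" for i
    proof -
      have "\<bar>d (z i) (z (Suc i)) - e (z i) (z (Suc i))\<bar> < r"
        using DX_lt[OF de] zM that by auto
      moreover have "d (z i) (z (Suc i)) \<le> m" unfolding m_def using that by (intro Max_ge) auto
      ultimately show ?thesis by linarith
    qed
    have "Max ((\<lambda>i. e (z i) (z (Suc i))) ` {..<N}) < m + r"
      using N0 steps by (subst Max_less_iff) auto
    moreover have "\<bar>d (z 0) (z N) - e (z 0) (z N)\<bar> < r" using DX_lt[OF de] zM by auto
    then have "\<delta> * d (z 0) (z N) - \<delta> * r < \<delta> * e (z 0) (z N)"
      using assms by (simp add: right_diff_distrib[symmetric])
    ultimately have "\<not> \<delta> * e (z 0) (z N) \<le> Max ((\<lambda>i. e (z i) (z (Suc i))) ` {..<N})"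
      using rr by (simp add: algebra_simps)
    then have "\<not> UDd \<delta> (topspace X) e" unfolding UDd_def using zM nc by blast
    then show "e \<in> Met X - {d \<in> Met X. UDd \<delta> (topspace X) d}" using eM by auto
  qed (rule r0)
qed auto

lemma UD_eq_UDd: "uniformly_disconnected M d \<longleftrightarrow> (\<exists>\<delta>. 0 < \<delta> \<and> \<delta> < 1 \<and> UDd \<delta> M d)"
  unfolding uniformly_disconnected_def UDd_def by simp

lemma UDd_mono:
  assumes "UDd \<delta> M d" "0 \<le> \<delta>'" "\<delta>' \<le> \<delta>" "Metric_space M d"
  shows "UDd \<delta>' M d"
  unfolding UDd_def
proof (intro allI impI)
  fix N :: nat and z :: "nat \<Rightarrow> 'a" assume h: "(\<forall>i\<le>N. z i \<in> M) \<and> (\<exists>i\<le>N. \<exists>j\<le>N. z i \<noteq> z j)"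
  have "0 \<le> d (z 0) (z N)" using Metric_space.nonneg[OF assms(4)] .
  then have "\<delta>' * d (z 0) (z N) \<le> \<delta> * d (z 0) (z N)" using assms by (intro mult_right_mono) auto
  also have "\<dots> \<le> Max ((\<lambda>i. d (z i) (z (Suc i))) ` {..<N})" using assms(1) h unfolding UDd_def by blast
  finally show "\<delta>' * d (z 0) (z N) \<le> Max ((\<lambda>i. d (z i) (z (Suc i))) ` {..<N})" .
qed

lemma UD_fsigma: "fsigma_in (Met_topology X) {d \<in> Met X. uniformly_disconnected (topspace X) d}"
proof -
  define C where "C n = {d \<in> Met X. UDd (1 / (real n + 2)) (topspace X) d}" for n :: nat
  have "{d \<in> Met X. uniformly_disconnected (topspace X) d} = \<Union> (range C)"
  proof (intro equalityI subsetI)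
    fix d assume "d \<in> {d \<in> Met X. uniformly_disconnected (topspace X) d}"
    then obtain \<delta> where d: "d \<in> Met X" "0 < \<delta>" "UDd \<delta> (topspace X) d"
      unfolding UD_eq_UDd by auto
    obtain n :: nat where n: "1 / \<delta> < real n" using reals_Archimedean2 by blast
    have "1 / (real n + 2) \<le> \<delta>"
    proof -
      have "1 / \<delta> < real n + 2" using n by linarith
      then show ?thesis using d(2) by (simp add: field_simps)
    qed
    then have "UDd (1 / (real n + 2)) (topspace X) d"
      using d UDd_mono[of \<delta> "topspace X" d] unfolding Met_def by auto
    then show "d \<in> \<Union> (range C)" using d unfolding C_def by auto
  next
    fix d assume "d \<in> \<Union> (range C)"
    then obtain n where "d \<in> Met X" "UDd (1 / (real n + 2)) (topspace X) d" unfolding C_def by auto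
    then show "d \<in> {d \<in> Met X. uniformly_disconnected (topspace X) d}"
      unfolding UD_eq_UDd by (auto intro!: exI[of _ "1 / (real n + 2)"])
  qed
  moreover have "closedin (Met_topology X) (C n)" for n
    unfolding C_def by (rule UDd_closed) auto
  ultimately show ?thesis
    unfolding fsigma_in_def union_of_def by (intro exI[of _ "range C"]) auto
qed

lemma mtopology_eqI:
  assumes ms: "Metric_space M e" and top: "topspace X = M"
  and h1: "\<And>U x. openin X U \<Longrightarrow> x \<in> U \<Longrightarrow> \<exists>r>0. Metric_space.mball M e x r \<subseteq> U"
  and h2: "\<And>x r. x \<in> M \<Longrightarrow> r > 0 \<Longrightarrow> \<exists>W. openin X W \<and> x \<in> W \<and> W \<subseteq> Metric_space.mball M e x r"
  shows "Metric_space.mtopology M e = X"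
proof -
  interpret E: Metric_space M e by (rule ms)
  show ?thesis
  proof (rule topology_eq[THEN iffD2], intro allI iffI)
    fix U assume "openin E.mtopology U"
    then have U: "U \<subseteq> M" "\<And>x. x\<in>U \<Longrightarrow> \<exists>r>0. E.mball x r \<subseteq> U" by (auto simp: E.openin_mtopology)
    show "openin X U"
    proof (subst openin_subopen, intro ballI)
      fix x assume "x \<in> U"
      obtain r where "r>0" "E.mball x r \<subseteq> U" using U(2)[OF \<open>x\<in>U\<close>] by blast
      moreover obtain W where "openin X W \<and> x \<in> W \<and> W \<subseteq> E.mball x r" using h2 \<open>r>0\<close> U(1) \<open>x\<in>U\<close> by blast
      ultimately show "\<exists>T. openin X T \<and> x \<in> T \<and> T \<subseteq> U" by blast
    qed
  next
    fix U assume "openin X U"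
    then show "openin E.mtopology U" unfolding E.openin_mtopology using openin_subset[of X U] top h1 by auto
  qed
qed

lemma small_pow: "(c::real) > 0 \<Longrightarrow> \<epsilon> > 0 \<Longrightarrow> \<exists>k. c * (1/2)^k < \<epsilon>"
proof -
  assume "c > 0" "\<epsilon> > 0"
  then obtain k where "(1/2::real)^k < \<epsilon> / c" using real_arch_pow_inv[of "\<epsilon>/c" "1/2"] by auto
  then show ?thesis using \<open>c > 0\<close> by (auto simp: field_simps)
qed

lemma clopen_partition:
  assumes dM: "d \<in> Met X" and cX: "compact_space X" and zX: "covering_dim_zero X" and rho: "\<rho> > 0"
  shows "\<exists>P. finite P \<and> (\<forall>V\<in>P. openin X V) \<and> \<Union>P = topspace X \<and> pairwise disjnt P \<and>
             (\<forall>V\<in>P. \<forall>x\<in>V. \<forall>y\<in>V. d x y < \<rho>)"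
proof -
  interpret Metric_space "topspace X" d using dM by (simp add: Met_def)
  have mt: "mtopology = X" using dM by (simp add: Met_def)
  define C where "C = (\<lambda>x. mball x (\<rho>/2)) ` topspace X"
  have Co: "\<forall>U\<in>C. openin X U"
  proof
    fix U assume "U \<in> C"
    then obtain x where "U = mball x (\<rho>/2)" unfolding C_def by blast
    then show "openin X U" using openin_mball[of x "\<rho>/2"] unfolding mt by simp
  qed
  have cov: "topspace X \<subseteq> \<Union>C"
  proof
    fix x assume "x \<in> topspace X"
    then have "x \<in> mball x (\<rho>/2)" using rho by simp
    then show "x \<in> \<Union>C" unfolding C_def using \<open>x \<in> topspace X\<close> by blast
  qed
  have cpt: "\<forall>\<U>. (\<forall>U\<in>\<U>. openin X U) \<and> topspace X \<subseteq> \<Union>\<U> \<longrightarrow> (\<exists>\<F>. finite \<F> \<and> \<F> \<subseteq> \<U> \<and> topspace X \<subseteq> \<Union>\<F>)"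
    using cX unfolding compact_space_def compactin_def by (rule conjunct2)
  have "\<exists>F. finite F \<and> F \<subseteq> C \<and> topspace X \<subseteq> \<Union>F"
    using cpt[THEN spec[of _ C], THEN mp, OF conjI[OF Co cov]] .
  then obtain F where F: "finite F" "F \<subseteq> C" "topspace X \<subseteq> \<Union>F" by blast
  have "\<Union>F \<subseteq> topspace X"
  proof
    fix y assume "y \<in> \<Union>F"
    then obtain U where "U \<in> F" "y \<in> U" by blast
    then obtain x where "U = mball x (\<rho>/2)" using F(2) unfolding C_def by blast
    then show "y \<in> topspace X" using \<open>y \<in> U\<close> mball_subset_mspace by blast
  qed
  then have FU: "\<Union>F = topspace X" using F(3) by blast
  have "\<forall>U\<in>F. openin X U" using F(2) Co by blast
  then have "\<exists>V. finite V \<and> (\<forall>W\<in>V. openin X W) \<and> \<Union>V = topspace X \<and>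
    (\<forall>W\<in>V. \<exists>U\<in>F. W \<subseteq> U) \<and> pairwise disjnt V"
    using zX[unfolded covering_dim_zero_def, THEN spec[of _ F], THEN mp, OF conjI[OF F(1) conjI]] \<open>\<forall>U\<in>F. openin X U\<close> FU by blast
  then obtain V where V: "finite V" "\<forall>W\<in>V. openin X W" "\<Union>V = topspace X"
    "\<forall>W\<in>V. \<exists>U\<in>F. W \<subseteq> U" "pairwise disjnt V" by blast
  have "\<forall>W\<in>V. \<forall>x\<in>W. \<forall>y\<in>W. d x y < \<rho>"
  proof (intro ballI)
    fix W x y assume "W \<in> V" "x \<in> W" "y \<in> W"
    then obtain U where "U \<in> F" "W \<subseteq> U" using V(4) by blast
    then obtain c where "c \<in> topspace X" "U = mball c (\<rho>/2)" using F(2) unfolding C_def by blast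
    then have "x \<in> mball c (\<rho>/2)" "y \<in> mball c (\<rho>/2)" using \<open>W \<subseteq> U\<close> \<open>x \<in> W\<close> \<open>y \<in> W\<close> by auto
    then have h: "d c x < \<rho>/2" "d c y < \<rho>/2" "x \<in> topspace X" "y \<in> topspace X" "c \<in> topspace X"
      unfolding in_mball by blast+
    then have "d x c < \<rho>/2" using commute[of x c] by simp
    then show "d x y < \<rho>" using triangle[of x c y] h by linarith
  qed
  then show ?thesis using V(1,2,3,5) by (intro exI[of _ V]) simp
qed

lemma ultra_chain:
  fixes u :: "'a \<Rightarrow> 'a \<Rightarrow> real" and z :: "nat \<Rightarrow> 'a" and N :: nat
  assumes ult: "\<And>x y z. x\<in>M \<Longrightarrow> y\<in>M \<Longrightarrow> z\<in>M \<Longrightarrow> u x z \<le> max (u x y) (u y z)"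
  shows "(\<forall>i\<le>N. z i \<in> M) \<Longrightarrow> 0 < N \<Longrightarrow> \<exists>i<N. u (z 0) (z N) \<le> u (z i) (z (Suc i))"
proof (induction N)
  case 0 then show ?case by simp
next
  case (Suc N)
  show ?case
  proof (cases "N = 0")
    case True
    have "u (z 0) (z (Suc N)) \<le> u (z 0) (z (Suc 0))" using True by simp
    then show ?thesis by (intro exI[of _ 0]) simp
  next
    case False
    then obtain i where i: "i < N" "u (z 0) (z N) \<le> u (z i) (z (Suc i))" using Suc by auto
    have "u (z 0) (z (Suc N)) \<le> max (u (z 0) (z N)) (u (z N) (z (Suc N)))"
      using ult Suc.prems by auto
    then show ?thesis
    proof (cases "u (z 0) (z N) \<le> u (z N) (z (Suc N))")
      case True
      then show ?thesis using \<open>u (z 0) (z (Suc N)) \<le> _\<close> by (intro exI[of _ N]) auto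
    next
      case False
      then show ?thesis using \<open>u (z 0) (z (Suc N)) \<le> _\<close> i by (intro exI[of _ i]) auto
    qed
  qed
qed

lemma dense_approx:
  assumes dM: "d \<in> Met X" and cX: "compact_space X" and zX: "covering_dim_zero X" and r: "r > 0"
  shows "\<exists>e\<in>Met X. uniformly_disconnected (topspace X) e \<and> DX X d e < ennreal r"
proof -
  interpret Metric_space "topspace X" d using dM by (simp add: Met_def)
  have mt: "mtopology = X" using dM by (simp add: Met_def)
  have "compactin mtopology (topspace X)" using cX unfolding compact_space_def mt .
  then have "mbounded (topspace X)" by (rule compactin_imp_mbounded)
  then obtain D0 where "\<forall>x\<in>topspace X. \<forall>y\<in>topspace X. d x y \<le> D0" unfolding mbounded_alt by blast
  then obtain D where D: "\<And>x y. x\<in>topspace X \<Longrightarrow> y\<in>topspace X \<Longrightarrow> d x y \<le> D" and D0: "0 \<le> D"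
    by (intro that[of "max D0 0"]) force+
  define \<rho> where "\<rho> k = (D+1) * (1/2::real)^k" for k
  have \<rho>pos: "\<rho> k > 0" for k unfolding \<rho>_def using D0 by simp
  have Pex: "\<forall>k. \<exists>P. finite P \<and> (\<forall>V\<in>P. openin X V) \<and> \<Union>P = topspace X \<and> pairwise disjnt P \<and>
             (\<forall>V\<in>P. \<forall>x\<in>V. \<forall>y\<in>V. d x y < \<rho> k)"
    using clopen_partition[OF dM cX zX \<rho>pos] by (rule allI)
  obtain P where P: "\<forall>k. finite (P k) \<and> (\<forall>V\<in>P k. openin X V) \<and> \<Union>(P k) = topspace X \<and> pairwise disjnt (P k) \<and>
             (\<forall>V\<in>P k. \<forall>x\<in>V. \<forall>y\<in>V. d x y < \<rho> k)"
    using choice[OF Pex] by (elim exE) (rule that)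
  have Popen: "\<And>k V. V \<in> P k \<Longrightarrow> openin X V" using P by blast
  have Pcov: "\<And>k. \<Union>(P k) = topspace X" using P by blast
  have Pdisj: "\<And>k. pairwise disjnt (P k)" using P by blast
  have Psmall: "\<And>k V x y. V \<in> P k \<Longrightarrow> x \<in> V \<Longrightarrow> y \<in> V \<Longrightarrow> d x y < \<rho> k" using P by blast
  define p where "p k x = (SOME V. V \<in> P k \<and> x \<in> V)" for k x
  have pP: "p k x \<in> P k \<and> x \<in> p k x" if "x \<in> topspace X" for k x
  proof -
    have "\<exists>V. V \<in> P k \<and> x \<in> V" using Pcov[of k] that by blast
    then show ?thesis unfolding p_def by (rule someI_ex)
  qed
  have psame: "p k y = p k x \<longleftrightarrow> y \<in> p k x" if "x \<in> topspace X" "y \<in> topspace X" for k x y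
  proof
    assume eq: "p k y = p k x"
    have "y \<in> p k y" using pP[of y k] that(2) by blast
    with eq show "y \<in> p k x" by simp
  next
    assume yx: "y \<in> p k x"
    show "p k y = p k x"
    proof (rule ccontr)
      assume "p k y \<noteq> p k x"
      then have "disjnt (p k y) (p k x)" using Pdisj[of k] pP[OF that(1)] pP[OF that(2)]
        unfolding pairwise_def by blast
      then show False using yx pP[OF that(2)] unfolding disjnt_def by blast
    qed
  qed
  have psame2: "p k x = p k y \<longleftrightarrow> y \<in> p k x" if "x \<in> topspace X" "y \<in> topspace X" for k x y
    using psame[OF that, of k] by (metis)
  have psmall: "d x y < \<rho> k" if "x \<in> topspace X" "y \<in> p k x" for k x y
    using Psmall[of "p k x" k x y] pP[OF that(1)] that(2) by blast
  have sep: "\<exists>k. p k x \<noteq> p k y" if "x \<in> topspace X" "y \<in> topspace X" "x \<noteq> y" for x y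
  proof -
    have "d x y > 0" using that nonneg[of x y] zero[of x y] by linarith
    then obtain k where k: "(D+1) * (1/2)^k < d x y" using small_pow[of "D+1" "d x y"] D0 by auto
    show ?thesis
    proof (intro exI[of _ k] notI)
      assume "p k x = p k y"
      then have "p k y = p k x" by (rule sym)
      then have "y \<in> p k x" using psame[OF that(1,2), of k] by blast
      then have "d x y < \<rho> k" using psmall that(1) by blast
      then show False using k unfolding \<rho>_def by simp
    qed
  qed
  define u where "u x y = (if x = y then 0 else (1/2::real)^(LEAST k. p k x \<noteq> p k y))" for x y
  have u_nonneg: "0 \<le> u x y" for x y unfolding u_def by simp
  have u_le1: "u x y \<le> 1" for x y unfolding u_def by (simp add: power_le_one)
  have u_sym: "u x y = u y x" for x y
  proof -
    have "(\<lambda>k. p k x \<noteq> p k y) = (\<lambda>k. p k y \<noteq> p k x)" by auto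
    then show ?thesis unfolding u_def by (simp add: eq_commute)
  qed
  have u_zero: "u x y = 0 \<longleftrightarrow> x = y" for x y unfolding u_def by simp
  have u_least: "u x y = (1/2)^(LEAST k. p k x \<noteq> p k y)" "p (LEAST k. p k x \<noteq> p k y) x \<noteq> p (LEAST k. p k x \<noteq> p k y) y"
    if "x \<in> topspace X" "y \<in> topspace X" "x \<noteq> y" for x y
    using that LeastI_ex[OF sep[OF that]] unfolding u_def by auto
  have u_bound: "d x y \<le> 2*(D+1) * u x y" if xy: "x \<in> topspace X" "y \<in> topspace X" for x y
  proof (cases "x = y")
    case True then show ?thesis using xy by (simp add: u_def)
  next
    case False
    define k0 where "k0 = (LEAST k. p k x \<noteq> p k y)"
    have uk: "u x y = (1/2)^k0" using u_least[OF xy False] unfolding k0_def by simp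
    show ?thesis
    proof (cases k0)
      case 0
      then show ?thesis using uk D[OF xy] D0 by simp
    next
      case (Suc j)
      have "\<not> (p j x \<noteq> p j y)" using not_less_Least[of j "\<lambda>k. p k x \<noteq> p k y"] Suc unfolding k0_def by simp
      then have "y \<in> p j x" using psame2[OF xy] by simp
      then have "d x y < \<rho> j" using psmall xy by blast
      moreover have "(1/2::real)^j = 2 * u x y" using uk Suc by simp
      then have "\<rho> j = 2*(D+1) * u x y" unfolding \<rho>_def by simp
      ultimately show ?thesis by linarith
    qed
  qed
  have u_small: "y \<in> p k x" if xy: "x \<in> topspace X" "y \<in> topspace X" and lt: "u x y < (1/2)^k" for x y k
  proof (cases "x = y")
    case True then show ?thesis using pP xy by blast
  next
    case False
    define k0 where "k0 = (LEAST k. p k x \<noteq> p k y)"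
    have uk: "u x y = (1/2)^k0" using u_least[OF xy False] unfolding k0_def by simp
    then have "k < k0" using lt by simp
    then have "\<not> (p k x \<noteq> p k y)" using not_less_Least[of k "\<lambda>k. p k x \<noteq> p k y"] unfolding k0_def by blast
    then show ?thesis using psame2[OF xy] by simp
  qed
  have u_le: "u x y \<le> (1/2)^(Suc k)" if xy: "x \<in> topspace X" "y \<in> topspace X" and al: "\<forall>j\<le>k. y \<in> p j x" for x y k
  proof (cases "x = y")
    case True then show ?thesis by (simp add: u_def)
  next
    case False
    define k0 where "k0 = (LEAST k. p k x \<noteq> p k y)"
    have uk: "u x y = (1/2)^k0" "p k0 x \<noteq> p k0 y" using u_least[OF xy False] unfolding k0_def by simp_all
    have "\<not> k0 \<le> k"
    proof
      assume "k0 \<le> k"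
      then have "y \<in> p k0 x" using al by blast
      then show False using uk(2) psame2[OF xy] by simp
    qed
    then have "Suc k \<le> k0" by simp
    then have "(1/2::real)^k0 \<le> (1/2)^(Suc k)" by (rule power_decreasing) auto
    then show ?thesis using uk(1) by (simp only:)
  qed
  have u_ultra: "u x z \<le> max (u x y) (u y z)" if xyz: "x \<in> topspace X" "y \<in> topspace X" "z \<in> topspace X" for x y z
  proof (cases "x = z")
    case True then show ?thesis using u_nonneg[of x y] by (simp add: u_def)
  next
    case False
    define k0 where "k0 = (LEAST k. p k x \<noteq> p k z)"
    have uk: "u x z = (1/2)^k0" "p k0 x \<noteq> p k0 z" using u_least[of x z] xyz False unfolding k0_def by simp_all
    show ?thesis
    proof (cases "p k0 x \<noteq> p k0 y")
      case True
      then have xy: "x \<noteq> y" by auto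
      have "(LEAST k. p k x \<noteq> p k y) \<le> k0" using True by (rule Least_le)
      then have "u x z \<le> u x y" using u_least[of x y] xyz xy uk by simp
      then show ?thesis by simp
    next
      case False
      then have yz: "p k0 y \<noteq> p k0 z" using uk(2) by simp
      then have yz': "y \<noteq> z" by auto
      have "(LEAST k. p k y \<noteq> p k z) \<le> k0" using yz by (rule Least_le)
      then have "u x z \<le> u y z" using u_least[of y z] xyz yz' uk by simp
      then show ?thesis by simp
    qed
  qed
  define \<eta> where "\<eta> = r / 2"
  have \<eta>: "0 < \<eta>" "\<eta> < r" using r unfolding \<eta>_def by auto
  define e where "e x y = max (d x y) (\<eta> * u x y)" for x y
  have eM: "Metric_space (topspace X) e"
  proof
    fix x y show "0 \<le> e x y" unfolding e_def using nonneg[of x y] by (simp add: le_max_iff_disj)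
    show "e x y = e y x" unfolding e_def using commute[of x y] u_sym[of x y] by simp
  next
    fix x y assume "x \<in> topspace X" "y \<in> topspace X"
    show "e x y = 0 \<longleftrightarrow> x = y"
    proof
      assume "e x y = 0"
      then have "d x y \<le> 0" unfolding e_def by simp
      then show "x = y" using nonneg[of x y] zero \<open>x \<in> topspace X\<close> \<open>y \<in> topspace X\<close> by (metis order.antisym)
    next
      assume "x = y" then show "e x y = 0" unfolding e_def using \<open>x \<in> topspace X\<close> by (simp add: u_def)
    qed
  next
    fix x y z assume xyz: "x \<in> topspace X" "y \<in> topspace X" "z \<in> topspace X"
    have "d x z \<le> e x y + e y z" using triangle[OF xyz] unfolding e_def by linarith
    moreover have "\<eta> * u x z \<le> e x y + e y z"
    proof -
      have "\<eta> * u x z \<le> \<eta> * max (u x y) (u y z)" using u_ultra[OF xyz] \<eta> by (simp add: mult_left_mono)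
      also have "\<dots> \<le> \<eta> * u x y + \<eta> * u y z" using u_nonneg[of x y] u_nonneg[of y z] \<eta>
        by (simp add: max_def mult_left_mono)
      also have "\<dots> \<le> e x y + e y z" unfolding e_def by simp
      finally show ?thesis .
    qed
    ultimately show "e x z \<le> e x y + e y z" unfolding e_def by simp
  qed
  have emt: "Metric_space.mtopology (topspace X) e = X"
  proof (rule mtopology_eqI[OF eM refl])
    fix U x assume U: "openin X U" "x \<in> U"
    then obtain s where s: "s > 0" "mball x s \<subseteq> U" using openin_mtopology[of U] unfolding mt by blast
    obtain k where k: "(D+1) * (1/2)^k < s" using small_pow[of "D+1" s] D0 s by auto
    show "\<exists>r>0. Metric_space.mball (topspace X) e x r \<subseteq> U"
    proof (intro exI[of _ "\<eta> * (1/2)^k"] conjI subsetI)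
      show "\<eta> * (1/2)^k > 0" using \<eta> by simp
      fix y assume "y \<in> Metric_space.mball (topspace X) e x (\<eta> * (1/2)^k)"
      then have y: "x \<in> topspace X" "y \<in> topspace X" "e x y < \<eta> * (1/2)^k"
        using Metric_space.in_mball[OF eM] by blast+
      then have "\<eta> * u x y < \<eta> * (1/2)^k" unfolding e_def by simp
      then have "u x y < (1/2)^k" using \<eta> by simp
      then have "y \<in> p k x" using u_small y by blast
      then have "d x y < s" using psmall[of x y k] y k unfolding \<rho>_def by simp
      then show "y \<in> U" using s y by auto
    qed
  next
    fix x s assume xs: "x \<in> topspace X" "(s::real) > 0"
    obtain k where k: "\<eta> * (1/2)^k < s" using small_pow[of \<eta> s] \<eta> xs by auto
    define W where "W = mball x s \<inter> \<Inter>((\<lambda>j. p j x) ` {..k})"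
    have "openin X (\<Inter>((\<lambda>j. p j x) ` {..k}))"
      by (rule openin_Inter) (use Popen pP xs in auto)
    moreover have "openin X (mball x s)" using openin_mball[of x s] unfolding mt .
    ultimately have "openin X W" unfolding W_def by (rule openin_Int[rotated])
    moreover have "x \<in> W" unfolding W_def using xs pP by auto
    moreover have "W \<subseteq> Metric_space.mball (topspace X) e x s"
    proof
      fix y assume "y \<in> W"
      then have y: "y \<in> topspace X" "d x y < s" "\<forall>j\<le>k. y \<in> p j x" unfolding W_def by auto
      have "u x y \<le> (1/2)^(Suc k)" using u_le[OF xs(1) y(1) y(3)] .
      also have "\<dots> \<le> (1/2)^k" by simp
      finally have "\<eta> * u x y < s" using k \<eta> by (smt (verit) mult_left_mono)
      then have "e x y < s" unfolding e_def using y by simp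
      then show "y \<in> Metric_space.mball (topspace X) e x s"
        using Metric_space.in_mball[OF eM] xs y by blast
    qed
    ultimately show "\<exists>W. openin X W \<and> x \<in> W \<and> W \<subseteq> Metric_space.mball (topspace X) e x s" by blast
  qed
  have eMet: "e \<in> Met X" unfolding Met_def using eM emt by simp
  define C where "C = 2*(D+1)"
  have C: "C > 0" unfolding C_def using D0 by simp
  define \<delta> where "\<delta> = \<eta> / (C + \<eta>)"
  have \<delta>: "0 < \<delta>" "\<delta> < 1" unfolding \<delta>_def using C \<eta> by auto
  have \<delta>C: "\<delta> * (C + \<eta>) = \<eta>" unfolding \<delta>_def using C \<eta> by simp
  have "UDd \<delta> (topspace X) e"
    unfolding UDd_def
  proof (intro allI impI)
    fix N :: nat and z :: "nat \<Rightarrow> 'a" assume h: "(\<forall>i\<le>N. z i \<in> topspace X) \<and> (\<exists>i\<le>N. \<exists>j\<le>N. z i \<noteq> z j)"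
    then have N: "0 < N" using nonconst_pos by blast
    obtain i where i: "i < N" "u (z 0) (z N) \<le> u (z i) (z (Suc i))"
      using ultra_chain[of "topspace X" u N z] u_ultra h N by blast
    have z0N: "z 0 \<in> topspace X" "z N \<in> topspace X" using h by auto
    have b: "d (z 0) (z N) \<le> C * u (z 0) (z N)" using u_bound[OF z0N] unfolding C_def .
    have n1: "0 \<le> C * u (z 0) (z N)" using C u_nonneg[of "z 0" "z N"] by simp
    have n2: "0 \<le> \<eta> * u (z 0) (z N)" using \<eta> u_nonneg[of "z 0" "z N"] by simp
    have "e (z 0) (z N) \<le> C * u (z 0) (z N) + \<eta> * u (z 0) (z N)"
      unfolding e_def max_def using b n1 n2 by auto
    then have "e (z 0) (z N) \<le> (C + \<eta>) * u (z 0) (z N)" by (simp add: distrib_right)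
    then have "\<delta> * e (z 0) (z N) \<le> \<delta> * ((C + \<eta>) * u (z 0) (z N))" using \<delta> by (simp add: mult_left_mono)
    also have "\<dots> = \<eta> * u (z 0) (z N)" using \<delta>C by (simp add: mult.assoc[symmetric])
    also have "\<dots> \<le> \<eta> * u (z i) (z (Suc i))" using i \<eta> by (simp add: mult_left_mono)
    also have "\<dots> \<le> e (z i) (z (Suc i))" unfolding e_def by simp
    also have "\<dots> \<le> Max ((\<lambda>i. e (z i) (z (Suc i))) ` {..<N})" using i by (intro Max_ge) auto
    finally show "\<delta> * e (z 0) (z N) \<le> Max ((\<lambda>i. e (z i) (z (Suc i))) ` {..<N})" .
  qed
  then have ud: "uniformly_disconnected (topspace X) e" unfolding UD_eq_UDd using \<delta> by blast
  have "DX X d e \<le> ennreal \<eta>"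
  proof (rule DX_le)
    fix x y assume "x \<in> topspace X" "y \<in> topspace X"
    show "\<bar>d x y - e x y\<bar> \<le> \<eta>"
      using nonneg[of x y] u_nonneg[of x y] u_le1[of x y] \<eta> unfolding e_def
      by (smt (verit) mult_left_le)
  qed
  also have "\<dots> < ennreal r" using \<eta> by (intro ennreal_lessI) auto
  finally show ?thesis using eMet ud by blast
qed

definition chainR :: "'a set \<Rightarrow> ('a \<Rightarrow> 'a \<Rightarrow> real) \<Rightarrow> real \<Rightarrow> 'a \<Rightarrow> 'a \<Rightarrow> bool" where
  "chainR M e r x y \<longleftrightarrow> (\<exists>N z. z 0 = x \<and> z N = y \<and> (\<forall>i\<le>N. z i \<in> M) \<and> (\<forall>i<N. e (z i) (z (Suc i)) < r))"

lemma chainR_refl: "x \<in> M \<Longrightarrow> chainR M e r x x"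
  unfolding chainR_def by (rule exI[of _ 0], rule exI[of _ "\<lambda>_. x"]) simp

lemma chainR_mem: "chainR M e r x y \<Longrightarrow> x \<in> M \<and> y \<in> M"
  unfolding chainR_def by (metis le0 order_refl)

lemma chainR_trans:
  assumes "chainR M e r x y" "chainR M e r y v"
  shows "chainR M e r x v"
proof -
  obtain N1 z1 where 1: "z1 0 = x" "z1 N1 = y" "\<forall>i\<le>N1. z1 i \<in> M" "\<forall>i<N1. e (z1 i) (z1 (Suc i)) < r"
    using assms(1) unfolding chainR_def by blast
  obtain N2 z2 where 2: "z2 0 = y" "z2 N2 = v" "\<forall>i\<le>N2. z2 i \<in> M" "\<forall>i<N2. e (z2 i) (z2 (Suc i)) < r"
    using assms(2) unfolding chainR_def by blast
  define z where "z i = (if i \<le> N1 then z1 i else z2 (i - N1))" for i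
  have zge: "z i = z2 (i - N1)" if "N1 \<le> i" for i
    using that 1(2) 2(1) unfolding z_def by (cases "i = N1") auto
  show ?thesis unfolding chainR_def
  proof (intro exI[of _ "N1 + N2"] exI[of _ z] conjI allI impI)
    show "z 0 = x" using 1(1) unfolding z_def by simp
    show "z (N1 + N2) = v" using zge[of "N1 + N2"] 2(2) by simp
  next
    fix i assume "i \<le> N1 + N2"
    then show "z i \<in> M" using 1(3) 2(3) unfolding z_def by auto
  next
    fix i assume i: "i < N1 + N2"
    show "e (z i) (z (Suc i)) < r"
    proof (cases "i < N1")
      case True then show ?thesis using 1(4) unfolding z_def by auto
    next
      case False
      then have "z i = z2 (i - N1)" "z (Suc i) = z2 (Suc (i - N1))" using zge[of i] zge[of "Suc i"] by (auto simp: Suc_diff_le)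
      then show ?thesis using 2(4) i False by auto
    qed
  qed
qed

lemma chainR_sym:
  assumes "chainR M e r x y" "\<And>a b. e a b = e b a"
  shows "chainR M e r y x"
proof -
  obtain N z where 1: "z 0 = x" "z N = y" "\<forall>i\<le>N. z i \<in> M" "\<forall>i<N. e (z i) (z (Suc i)) < r"
    using assms(1) unfolding chainR_def by blast
  show ?thesis unfolding chainR_def
  proof (intro exI[of _ N] exI[of _ "\<lambda>i. z (N - i)"] conjI allI impI)
    show "z (N - 0) = y" using 1 by simp
    show "z (N - N) = x" using 1 by simp
  next
    fix i assume "i \<le> N" then show "z (N - i) \<in> M" using 1(3) by auto
  next
    fix i assume i: "i < N"
    then have "e (z (N - Suc i)) (z (Suc (N - Suc i))) < r" using 1(4) by auto
    moreover have "Suc (N - Suc i) = N - i" using i by simp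
    ultimately show "e (z (N - i)) (z (N - Suc i)) < r" using assms(2) by metis
  qed
qed

lemma UD_dim0:
  assumes eMet: "e \<in> Met X" and cX: "compact_space X" and \<delta>: "0 < \<delta>" and ud: "UDd \<delta> (topspace X) e"
  shows "covering_dim_zero X"
  unfolding covering_dim_zero_def
proof (intro allI impI)
  interpret Metric_space "topspace X" e using eMet by (simp add: Met_def)
  have mt: "mtopology = X" using eMet by (simp add: Met_def)
  fix \<U> assume U: "finite \<U> \<and> (\<forall>U\<in>\<U>. openin X U) \<and> \<Union>\<U> = topspace X"
  have c1: "compactin mtopology (topspace X)" using cX unfolding compact_space_def mt .
  have c2: "topspace X \<subseteq> \<Union>\<U>" using U by simp
  have c3: "\<And>U. U \<in> \<U> \<Longrightarrow> openin mtopology U" using U unfolding mt by blast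
  obtain \<epsilon> where \<epsilon>: "\<epsilon> > 0" "\<forall>x \<in> topspace X. \<exists>U \<in> \<U>. mball x \<epsilon> \<subseteq> U"
    using lebesgue_number[OF c1 c2 c3] by blast
  define r where "r = \<delta> * \<epsilon> / 2"
  have r: "r > 0" unfolding r_def using \<delta> \<epsilon> by simp
  define K where "K x = {y. chainR (topspace X) e r x y}" for x
  have Ktrans: "K y = K x" if yx: "y \<in> K x" for x y
  proof -
    have xy: "chainR (topspace X) e r x y" using yx unfolding K_def by simp
    have yx': "chainR (topspace X) e r y x" by (rule chainR_sym[OF xy commute])
    show ?thesis
    proof (intro equalityI subsetI)
      fix v assume "v \<in> K y"
      then have "chainR (topspace X) e r y v" unfolding K_def by simp
      then have "chainR (topspace X) e r x v" using chainR_trans[OF xy] by blast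
      then show "v \<in> K x" unfolding K_def by simp
    next
      fix v assume "v \<in> K x"
      then have "chainR (topspace X) e r x v" unfolding K_def by simp
      then have "chainR (topspace X) e r y v" using chainR_trans[OF yx'] by blast
      then show "v \<in> K y" unfolding K_def by simp
    qed
  qed
  have Kself: "x \<in> K x" if "x \<in> topspace X" for x
  proof -
    have "chainR (topspace X) e r x x" by (rule chainR_refl[OF that])
    then show ?thesis unfolding K_def by simp
  qed
  have Ksub: "K x \<subseteq> topspace X" for x
  proof
    fix y assume "y \<in> K x"
    then have "chainR (topspace X) e r x y" unfolding K_def by simp
    then show "y \<in> topspace X" by (rule chainR_mem[THEN conjunct2])
  qed
  have Kopen0: "openin mtopology (K x)" for x
    unfolding openin_mtopology
  proof (intro conjI allI impI)
    show "K x \<subseteq> topspace X" by (rule Ksub)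
    fix y assume y: "y \<in> K x"
    show "\<exists>r>0. mball y r \<subseteq> K x"
    proof (intro exI[of _ r] conjI subsetI)
      show "r > 0" by (rule r)
      fix w assume "w \<in> mball y r"
      then have yw: "chainR (topspace X) e r y w" unfolding chainR_def
        by (intro exI[of _ 1] exI[of _ "\<lambda>i. if i = 0 then y else w"]) (auto simp: le_Suc_eq)
      have xy: "chainR (topspace X) e r x y" using y unfolding K_def by simp
      have "chainR (topspace X) e r x w" using chainR_trans[OF xy yw] .
      then show "w \<in> K x" unfolding K_def by simp
    qed
  qed
  have Ksmall: "e x y < \<epsilon>" if yK: "y \<in> K x" for x y
  proof -
    have "chainR (topspace X) e r x y" using yK unfolding K_def by simp
    then obtain N z where z: "z 0 = x" "z N = y" "\<forall>i\<le>N. z i \<in> topspace X" "\<forall>i<N. e (z i) (z (Suc i)) < r"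
      unfolding chainR_def by blast
    show ?thesis
    proof (cases "x = y")
      case True
      have "x \<in> topspace X" using z by auto
      then show ?thesis using True \<epsilon> by simp
    next
      case False
      then have nc: "\<exists>i\<le>N. \<exists>j\<le>N. z i \<noteq> z j" using z by (intro exI[of _ 0]) auto
      then have N: "0 < N" by (rule nonconst_pos)
      have "(\<forall>i\<le>N. z i \<in> topspace X) \<and> (\<exists>i\<le>N. \<exists>j\<le>N. z i \<noteq> z j)" using z(3) nc by blast
      then have "\<delta> * e (z 0) (z N) \<le> Max ((\<lambda>i. e (z i) (z (Suc i))) ` {..<N})"
        using ud unfolding UDd_def by blast
      also have "\<dots> < r" using N z(4) by (subst Max_less_iff) auto
      finally have "\<delta> * e x y < \<delta> * \<epsilon> / 2" using z unfolding r_def by simp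
      then have "e x y < \<epsilon> / 2" using \<delta> by (simp add: field_simps)
      then show ?thesis using \<epsilon> by simp
    qed
  qed
  have Kopen: "openin X (K x)" for x using Kopen0[of x] unfolding mt .
  define \<V> where "\<V> = K ` topspace X"
  have Vcov: "\<Union>\<V> = topspace X" unfolding \<V>_def using Ksub Kself by blast
  have Vopen: "\<forall>V\<in>\<V>. openin X V" unfolding \<V>_def using Kopen by blast
  have Vdisj: "pairwise disjnt \<V>"
    unfolding pairwise_def disjnt_def \<V>_def
  proof (intro ballI impI)
    fix V W assume "V \<in> K ` topspace X" "W \<in> K ` topspace X" "V \<noteq> W"
    then obtain x y where "V = K x" "W = K y" by blast
    show "V \<inter> W = {}"
    proof (rule ccontr)
      assume "V \<inter> W \<noteq> {}"
      then obtain w where "w \<in> K x" "w \<in> K y" using \<open>V = K x\<close> \<open>W = K y\<close> by blast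
      then have "K x = K y" using Ktrans by metis
      then show False using \<open>V \<noteq> W\<close> \<open>V = K x\<close> \<open>W = K y\<close> by simp
    qed
  qed
  have Vref: "\<forall>V\<in>\<V>. \<exists>U\<in>\<U>. V \<subseteq> U"
  proof
    fix V assume "V \<in> \<V>"
    then obtain x where x: "x \<in> topspace X" "V = K x" unfolding \<V>_def by blast
    obtain U where U: "U \<in> \<U>" "mball x \<epsilon> \<subseteq> U" using \<epsilon>(2) x(1) by blast
    have "K x \<subseteq> mball x \<epsilon>"
    proof
      fix w assume "w \<in> K x"
      then have "w \<in> topspace X" "e x w < \<epsilon>" using Ksub[of x] Ksmall[of w x] by blast+
      then show "w \<in> mball x \<epsilon>" using x(1) by simp
    qed
    then show "\<exists>U\<in>\<U>. V \<subseteq> U" using U x by blast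
  qed
  have cpt: "\<forall>\<U>. (\<forall>U\<in>\<U>. openin X U) \<and> topspace X \<subseteq> \<Union>\<U> \<longrightarrow> (\<exists>\<F>. finite \<F> \<and> \<F> \<subseteq> \<U> \<and> topspace X \<subseteq> \<Union>\<F>)"
    using cX unfolding compact_space_def compactin_def by (rule conjunct2)
  have "\<exists>F. finite F \<and> F \<subseteq> \<V> \<and> topspace X \<subseteq> \<Union>F"
    using cpt[THEN spec[of _ \<V>], THEN mp, OF conjI[OF Vopen equalityD2[OF Vcov]]] .
  then obtain F where F: "finite F" "F \<subseteq> \<V>" "topspace X \<subseteq> \<Union>F" by blast
  have "\<V> \<subseteq> F"
  proof
    fix V assume "V \<in> \<V>"
    then obtain x where x: "x \<in> topspace X" "V = K x" unfolding \<V>_def by blast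
    then obtain W where "W \<in> F" "x \<in> W" using F(3) by blast
    then obtain y where "W = K y" using F(2) unfolding \<V>_def by blast
    then have "K x = W" using Ktrans[of x y] \<open>x \<in> W\<close> by simp
    then show "V \<in> F" using x \<open>W \<in> F\<close> by simp
  qed
  then have "finite \<V>" using F(1) by (rule finite_subset)
  then show "\<exists>\<V>. finite \<V> \<and> (\<forall>V\<in>\<V>. openin X V) \<and> \<Union>\<V> = topspace X \<and>
             (\<forall>V\<in>\<V>. \<exists>U\<in>\<U>. V \<subseteq> U) \<and> pairwise disjnt \<V>"
    using Vopen Vcov Vref Vdisj by (intro exI[of _ \<V>] conjI)
qed

lemma noncompact_bad:
  assumes mX: "metrizable_space X" and ncX: "\<not> compact_space X"
  shows "\<exists>d\<in>Met X. \<forall>e\<in>Met X. DX X d e < ennreal 1 \<longrightarrow> \<not> uniformly_disconnected (topspace X) e"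
proof -
  obtain M \<rho> where \<rho>: "Metric_space M \<rho>" "X = Metric_space.mtopology M \<rho>"
    using mX unfolding metrizable_space_def by blast
  interpret R: Metric_space M \<rho> by (rule \<rho>(1))
  have MX: "topspace X = M" using \<rho>(2) by simp
  have "\<not> compact_space R.mtopology" using ncX \<rho>(2) by simp
  then obtain S where S: "S \<subseteq> M" "infinite S" "R.mtopology derived_set_of S = {}"
    unfolding R.compact_space_eq_Bolzano_Weierstrass by blast
  obtain f :: "nat \<Rightarrow> 'a" where f: "inj f" "range f \<subseteq> S"
    using infinite_countable_subset[OF S(2)] by blast
  define T where "T = range f"
  have TM: "T \<subseteq> M" using f(2) S(1) unfolding T_def by blast
  have clT: "closedin X A" if "A \<subseteq> T" for A
  proof -
    have "X derived_set_of A \<subseteq> X derived_set_of S"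
      using that f(2) unfolding T_def by (intro derived_set_of_mono) blast
    then have "X derived_set_of A = {}" using S(3) \<rho>(2) by simp
    then show ?thesis unfolding closedin_contains_derived_set using that TM MX by blast
  qed
  define h where "h x = real (inv f x)" for x
  have conth: "continuous_map (subtopology X T) euclidean h"
    unfolding continuous_map_closedin
  proof (intro conjI allI impI)
    show "h \<in> topspace (subtopology X T) \<rightarrow> topspace euclidean" by simp
    fix C :: "real set" assume "closedin euclidean C"
    define A where "A = {x \<in> topspace (subtopology X T). h x \<in> C}"
    have AT: "A \<subseteq> T" unfolding A_def by auto
    then have "closedin X A" by (rule clT)
    moreover have "A = A \<inter> T" using AT by blast
    ultimately show "closedin (subtopology X T) {x \<in> topspace (subtopology X T). h x \<in> C}"
      unfolding closedin_subtopology A_def[symmetric] by blast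
  qed
  have nX: "normal_space X" using mX by (rule metrizable_imp_normal_space)
  have cT: "closedin X T" by (rule clT) simp
  have "\<exists>g:: 'a \<Rightarrow> real. continuous_map X euclidean g \<and> (\<forall>x \<in> T. g x = h x)"
    using normal_space_iff_Tietze[THEN iffD1, OF nX, rule_format, OF conjI[OF cT conth]] .
  then obtain g :: "'a \<Rightarrow> real" where g: "continuous_map X euclidean g" "\<forall>x\<in>T. g x = h x"
    by blast
  have gf: "g (f n) = real n" for n
    using g(2) f(1) unfolding T_def h_def by simp
  define d where "d x y = min (\<rho> x y) 1 + \<bar>g x - g y\<bar>" for x y
  have dM: "Metric_space M d"
  proof
    fix x y show "0 \<le> d x y" unfolding d_def using R.nonneg[of x y] by simp
    show "d x y = d y x" unfolding d_def using R.commute[of x y] by simp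
  next
    fix x y assume xy: "x \<in> M" "y \<in> M"
    show "d x y = 0 \<longleftrightarrow> x = y"
    proof
      assume "d x y = 0"
      then have "min (\<rho> x y) 1 = 0" unfolding d_def using R.nonneg[of x y] by linarith
      then have "\<rho> x y = 0" by (simp add: min_def split: if_splits)
      then show "x = y" using R.zero xy by blast
    next
      assume "x = y" then show "d x y = 0" unfolding d_def using xy by simp
    qed
  next
    fix x y z assume xyz: "x \<in> M" "y \<in> M" "z \<in> M"
    have t: "\<rho> x z \<le> \<rho> x y + \<rho> y z" by (rule R.triangle[OF xyz])
    have n1: "0 \<le> \<rho> x y" "0 \<le> \<rho> y z" by simp_all
    have "min (\<rho> x z) 1 \<le> min (\<rho> x y) 1 + min (\<rho> y z) 1"
      using t n1 by (smt (verit))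
    then show "d x z \<le> d x y + d y z" unfolding d_def by linarith
  qed
  have dmt: "Metric_space.mtopology M d = X"
  proof (rule mtopology_eqI[OF dM MX])
    fix U x assume U: "openin X U" "x \<in> U"
    then obtain s where s: "s > 0" "R.mball x s \<subseteq> U"
      using R.openin_mtopology[of U] \<rho>(2) by auto
    show "\<exists>r>0. Metric_space.mball M d x r \<subseteq> U"
    proof (intro exI[of _ "min s 1"] conjI subsetI)
      show "min s 1 > 0" using s by simp
      fix y assume "y \<in> Metric_space.mball M d x (min s 1)"
      then have y: "x \<in> M" "y \<in> M" "d x y < min s 1" using Metric_space.in_mball[OF dM] by blast+
      then have "min (\<rho> x y) 1 < min s 1" unfolding d_def by linarith
      then have "\<rho> x y < s" by (simp add: min_def split: if_splits)
      then show "y \<in> U" using s y by auto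
    qed
  next
    fix x s assume xs: "x \<in> M" "(s::real) > 0"
    define W where "W = R.mball x (s/2) \<inter> {y \<in> topspace X. g y \<in> ball (g x) (s/2)}"
    have "openin X (R.mball x (s/2))" using R.openin_mball \<rho>(2) by simp
    moreover have "openin X {y \<in> topspace X. g y \<in> ball (g x) (s/2)}"
      by (rule openin_continuous_map_preimage[OF g(1)]) simp
    ultimately have "openin X W" unfolding W_def by (rule openin_Int)
    moreover have "x \<in> W" unfolding W_def using xs MX by simp
    moreover have "W \<subseteq> Metric_space.mball M d x s"
    proof
      fix y assume "y \<in> W"
      then have y: "y \<in> M" "\<rho> x y < s/2" "\<bar>g x - g y\<bar> < s/2" unfolding W_def by (auto simp: dist_real_def)
      have "d x y < s" unfolding d_def using y R.nonneg[of x y] by linarith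
      then show "y \<in> Metric_space.mball M d x s" using Metric_space.in_mball[OF dM] xs y by blast
    qed
    ultimately show "\<exists>W. openin X W \<and> x \<in> W \<and> W \<subseteq> Metric_space.mball M d x s" by blast
  qed
  have dMet: "d \<in> Met X" unfolding Met_def using dM dmt MX by simp
  show ?thesis
  proof (intro bexI[OF _ dMet] ballI impI notI)
    fix e assume eM: "e \<in> Met X" and de: "DX X d e < ennreal 1" and ud: "uniformly_disconnected (topspace X) e"
    obtain \<delta> where \<delta>: "0 < \<delta>" "UDd \<delta> (topspace X) e" using ud unfolding UD_eq_UDd by blast
    obtain N :: nat where N: "3 / \<delta> + 1 < real N" using reals_Archimedean2 by blast
    have "3 / \<delta> > 0" using \<delta>(1) by simp
    then have "real N > 0" using N by linarith
    then have N0: "0 < N" by simp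
    have fM: "f i \<in> topspace X" for i using TM MX unfolding T_def by blast
    have "f 0 \<noteq> f N"
    proof
      assume "f 0 = f N"
      then have "0 = N" using injD[OF f(1)] by blast
      then show False using N0 by simp
    qed
    then have nc: "\<exists>i\<le>N. \<exists>j\<le>N. f i \<noteq> f j" by blast
    have "(\<forall>i\<le>N. f i \<in> topspace X) \<and> (\<exists>i\<le>N. \<exists>j\<le>N. f i \<noteq> f j)" using fM nc by blast
    then have "\<delta> * e (f 0) (f N) \<le> Max ((\<lambda>i. e (f i) (f (Suc i))) ` {..<N})"
      using \<delta>(2) unfolding UDd_def by blast
    also have "\<dots> < 3"
    proof (subst Max_less_iff)
      show "finite ((\<lambda>i. e (f i) (f (Suc i))) ` {..<N})" by simp
      have "0 \<in> {..<N}" using N0 by simp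
      then show "(\<lambda>i. e (f i) (f (Suc i))) ` {..<N} \<noteq> {}" by blast
      show "\<forall>a\<in>(\<lambda>i. e (f i) (f (Suc i))) ` {..<N}. a < 3"
      proof
        fix a assume "a \<in> (\<lambda>i. e (f i) (f (Suc i))) ` {..<N}"
        then obtain i where a: "a = e (f i) (f (Suc i))" by blast
        have "\<bar>d (f i) (f (Suc i)) - e (f i) (f (Suc i))\<bar> < 1" using DX_lt[OF de fM fM] .
        moreover have "d (f i) (f (Suc i)) \<le> 2" unfolding d_def gf by simp
        ultimately show "a < 3" using a by linarith
      qed
    qed
    finally have lt3: "\<delta> * e (f 0) (f N) < 3" .
    have "\<bar>d (f 0) (f N) - e (f 0) (f N)\<bar> < 1" using DX_lt[OF de fM fM] .
    moreover have "real N \<le> d (f 0) (f N)" unfolding d_def gf using R.nonneg[of "f 0" "f N"] by simp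
    ultimately have "real N - 1 < e (f 0) (f N)" by linarith
    then have "\<delta> * (real N - 1) < \<delta> * e (f 0) (f N)" using \<delta>(1) by simp
    moreover have "3 < \<delta> * (real N - 1)"
    proof -
      have "3 / \<delta> < real N - 1" using N by linarith
      then have "3 < (real N - 1) * \<delta>" using \<delta>(1) by (simp add: pos_divide_less_eq)
      then show ?thesis by (simp add: mult.commute)
    qed
    ultimately show False using lt3 by linarith
  qed
qed

theorem theorem1p2:
  fixes X :: "'a topology"
  assumes "metrizable_space X"
  shows "(covering_dim_zero X \<and> compact_space X) \<longleftrightarrow>
    (Met_topology X closure_of {d \<in> Met X. uniformly_disconnected (topspace X) d}
        = topspace (Met_topology X) \<and>
     fsigma_in (Met_topology X) {d \<in> Met X. uniformly_disconnected (topspace X) d})"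
proof -
  define S where "S = {d \<in> Met X. uniformly_disconnected (topspace X) d}"
  have fs: "fsigma_in (Met_topology X) S" unfolding S_def by (rule UD_fsigma)
  obtain M \<rho> where \<rho>: "Metric_space M \<rho>" "X = Metric_space.mtopology M \<rho>"
    using assms unfolding metrizable_space_def by blast
  have MX: "topspace X = M" using \<rho>(2) Metric_space.topspace_mtopology[OF \<rho>(1)] by simp
  have \<rho>Met: "\<rho> \<in> Met X" unfolding Met_def using \<rho> MX by simp
  have closure_iff: "Met_topology X closure_of S = topspace (Met_topology X) \<longleftrightarrow>
      (\<forall>d\<in>Met X. \<forall>T. d \<in> T \<and> openin (Met_topology X) T \<longrightarrow> (\<exists>y. y \<in> S \<and> y \<in> T))"
  proof
    assume "Met_topology X closure_of S = topspace (Met_topology X)"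
    then show "\<forall>d\<in>Met X. \<forall>T. d \<in> T \<and> openin (Met_topology X) T \<longrightarrow> (\<exists>y. y \<in> S \<and> y \<in> T)"
      using in_closure_of[of _ "Met_topology X" S] topspace_Met_topology[of X] by blast
  next
    assume h: "\<forall>d\<in>Met X. \<forall>T. d \<in> T \<and> openin (Met_topology X) T \<longrightarrow> (\<exists>y. y \<in> S \<and> y \<in> T)"
    show "Met_topology X closure_of S = topspace (Met_topology X)"
    proof (rule equalityI)
      show "Met_topology X closure_of S \<subseteq> topspace (Met_topology X)" by (rule closure_of_subset_topspace)
      show "topspace (Met_topology X) \<subseteq> Met_topology X closure_of S"
      proof
        fix d assume "d \<in> topspace (Met_topology X)"
        then have dM: "d \<in> Met X" using topspace_Met_topology[of X] by simp
        show "d \<in> Met_topology X closure_of S"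
          unfolding in_closure_of using h dM topspace_Met_topology[of X] by simp
      qed
    qed
  qed
  show ?thesis
    unfolding S_def[symmetric]
  proof
    assume zc: "covering_dim_zero X \<and> compact_space X"
    have "\<forall>d\<in>Met X. \<forall>T. d \<in> T \<and> openin (Met_topology X) T \<longrightarrow> (\<exists>y. y \<in> S \<and> y \<in> T)"
    proof (intro ballI allI impI)
      fix d T assume dM: "d \<in> Met X" and T: "d \<in> T \<and> openin (Met_topology X) T"
      then obtain r where r: "r > 0" "\<forall>e\<in>Met X. DX X d e < ennreal r \<longrightarrow> e \<in> T"
        unfolding openin_Met_topology Met_open_def by blast
      obtain e where e: "e \<in> Met X" "uniformly_disconnected (topspace X) e" "DX X d e < ennreal r"
        using dense_approx[OF dM zc[THEN conjunct2] zc[THEN conjunct1] r(1)] by blast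
      show "\<exists>y. y \<in> S \<and> y \<in> T" using e r(2) unfolding S_def by blast
    qed
    then show "Met_topology X closure_of S = topspace (Met_topology X) \<and> fsigma_in (Met_topology X) S"
      using closure_iff fs by blast
  next
    assume "Met_topology X closure_of S = topspace (Met_topology X) \<and> fsigma_in (Met_topology X) S"
    then have h: "\<forall>d\<in>Met X. \<forall>T. d \<in> T \<and> openin (Met_topology X) T \<longrightarrow> (\<exists>y. y \<in> S \<and> y \<in> T)"
      using closure_iff by blast
    have cX: "compact_space X"
    proof (rule ccontr)
      assume "\<not> compact_space X"
      then obtain d where dM: "d \<in> Met X"
        and bad: "\<forall>e\<in>Met X. DX X d e < ennreal 1 \<longrightarrow> \<not> uniformly_disconnected (topspace X) e"
        using noncompact_bad[OF assms] by blast
      define B where "B = {e \<in> Met X. DX X d e < ennreal 1}"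
      have Bo: "openin (Met_topology X) B" unfolding B_def openin_Met_topology by (rule DX_ball_open) simp
      have "DX X d d \<le> ennreal 0" by (rule DX_le) simp
      then have "DX X d d < ennreal 1" by simp
      then have "d \<in> B" unfolding B_def using dM by simp
      then obtain y where "y \<in> S" "y \<in> B" using h dM Bo by blast
      then show False using bad unfolding S_def B_def by blast
    qed
    have Mo: "openin (Met_topology X) (Met X)" using openin_topspace[of "Met_topology X"] topspace_Met_topology[of X] by simp
    obtain e where "e \<in> S" using h \<rho>Met Mo by blast
    then have eM: "e \<in> Met X" and ud: "uniformly_disconnected (topspace X) e" unfolding S_def by auto
    obtain \<delta> where \<delta>: "0 < \<delta>" "UDd \<delta> (topspace X) e" using ud unfolding UD_eq_UDd by blast
    have "covering_dim_zero X" by (rule UD_dim0[OF eM cX \<delta>])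
    then show "covering_dim_zero X \<and> compact_space X" using cX by simp
  qed
qed

end
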